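(* Let $p\in[1,\infty)$ and $G\in\mathcal{P}_*(\Theta)$. For every $\varepsilon>0$ there exists $n\in\mathbb{N}$ such that the measure $G^{(n)}=\sum_{l=1}^{2^n}G(\bar\Theta_{n,l})\delta_{\mu_{n+1,2l-1}}$ satisfies $W_p(G^{(n)},G)<\varepsilon$.
   Context: $\Theta\subseteq\mathbb{R}$ is $\mathbb{R}$, a closed half-line, or a compact interval with nonempty interior. $\mathcal{P}_*(\Theta)$: Borel probability measures on $\Theta$ whose support is a non-degenerate compact interval. $W_p$ is the Wasserstein distance of order $p$. $G$ is identified with its distribution function; $b_G(a_1,a_2]=\int_{(a_1,a_2]}\theta\,dG/(G(a_2)-G(a_1))$ if $G(a_2)>G(a_1)$, else $a_1$. SBA: $\mu_{1,1}=\int\theta\,dG$; for $j\ge2$, $\mu_{j,2l}=\mu_{j-1,l}$, $\mu_{j,2l-1}=b_G(\mu_{j-1,l-1},\mu_{j-1,l}]$, with $\mu_{j,0}=\inf\Theta$, $\mu_{j,2^j}=\sup\Theta$. $\Theta_{n,1}=[\mu_{n,0},\mu_{n,1}]$ if $\mu_{n,0}>-\infty$, else $(\mu_{n,0},\mu_{n,1}]$; $\Theta_{n,l}=(\mu_{n,l-1},\mu_{n,l}]$ for $2\le l\le 2^n-1$; $\Theta_{n,2^n}=(\mu_{n,2^n-1},\mu_{n,2^n}]$ if $\mu_{n,2^n}<\infty$, else $(\mu_{n,2^n-1},\infty)$. $\bar\Theta_{n,1}=\Theta_{n,1}\cap\operatorname{supp}(G)$, $\bar\Theta_{n,l}=\Theta_{n,l}$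 for $2\le l\le 2^n-1$, $\bar\Theta_{n,2^n}=\Theta_{n,2^n}\cap\operatorname{supp}(G)$. *)

theory Defs
  imports "HOL-Probability.Probability"
begin

text \<open>The parameter set Theta is given by its endpoints lo = inf Theta, hi = sup Theta
  (extended reals, lo < hi); Theta is the closed (in R) set of reals between them.
  This covers R, closed half-lines and compact intervals with nonempty interior.\<close>
definition Theta_set :: "ereal \<Rightarrow> ereal \<Rightarrow> real set" where
  "Theta_set lo hi = {x. lo \<le> ereal x \<and> ereal x \<le> hi}"

definition msupp :: "real measure \<Rightarrow> real set" where
  "msupp G = {x. \<forall>e>0. emeasure G (ball x e) > 0}"

definition Pstar :: "ereal \<Rightarrow> ereal \<Rightarrow> real measure set" where
  "Pstar lo hi = {G. sets G = sets borel \<and> prob_space G \<and> emeasure G (Theta_set lo hi) = 1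
                    \<and> (\<exists>a b. a < b \<and> msupp G = {a..b})}"

definition cdf_e :: "real measure \<Rightarrow> ereal \<Rightarrow> real" where
  "cdf_e G a = measure G {x. ereal x \<le> a}"

definition bG :: "real measure \<Rightarrow> ereal \<Rightarrow> ereal \<Rightarrow> ereal" where
  "bG G a1 a2 = (if cdf_e G a2 > cdf_e G a1
      then ereal ((LINT x:{x. a1 < ereal x \<and> ereal x \<le> a2}|G. x) / (cdf_e G a2 - cdf_e G a1))
      else a1)"

text \<open>Successive bisection algorithm: sba G lo hi j l = mu_{j,l} (for j \<ge> 1, 0 \<le> l \<le> 2^j).\<close>
fun sba :: "real measure \<Rightarrow> ereal \<Rightarrow> ereal \<Rightarrow> nat \<Rightarrow> nat \<Rightarrow> ereal" where
  "sba G lo hi 0 l = (if l = 0 then lo else hi)"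
| "sba G lo hi (Suc 0) l =
     (if l = 0 then lo else if l = 1 then ereal (integral\<^sup>L G (\<lambda>x. x)) else hi)"
| "sba G lo hi (Suc (Suc j)) l =
     (if l = 0 then lo
      else if l \<ge> 2 ^ Suc (Suc j) then hi
      else if even l then sba G lo hi (Suc j) (l div 2)
      else bG G (sba G lo hi (Suc j) (l div 2)) (sba G lo hi (Suc j) (l div 2 + 1)))"

text \<open>The cells Theta_{n,l} (1 \<le> l \<le> 2^n), as sets of reals; the closedness / openness
  conventions at infinite endpoints are automatic since reals are finite.\<close>
definition cell :: "real measure \<Rightarrow> ereal \<Rightarrow> ereal \<Rightarrow> nat \<Rightarrow> nat \<Rightarrow> real set" where
  "cell G lo hi n l =
     (if l = 1 then {x. sba G lo hi n 0 \<le> ereal x \<and> ereal x \<le> sba G lo hi n 1}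
      else {x. sba G lo hi n (l - 1) < ereal x \<and> ereal x \<le> sba G lo hi n l})"

definition barcell :: "real measure \<Rightarrow> ereal \<Rightarrow> ereal \<Rightarrow> nat \<Rightarrow> nat \<Rightarrow> real set" where
  "barcell G lo hi n l =
     (if l = 1 \<or> l = 2 ^ n then cell G lo hi n l \<inter> msupp G else cell G lo hi n l)"

definition approx_meas :: "real measure \<Rightarrow> ereal \<Rightarrow> ereal \<Rightarrow> nat \<Rightarrow> real measure" where
  "approx_meas G lo hi n = measure_of UNIV (sets borel)
     (\<lambda>A. \<Sum>l\<in>{1..2^n}. emeasure G (barcell G lo hi n l)
            * indicator A (real_of_ereal (sba G lo hi (Suc n) (2 * l - 1))))"

definition couplings :: "real measure \<Rightarrow> real measure \<Rightarrow> (real \<times> real) measure set" where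
  "couplings \<mu> \<nu> = {\<pi>. sets \<pi> = sets (borel :: (real \<times> real) measure)
      \<and> distr \<pi> borel fst = \<mu> \<and> distr \<pi> borel snd = \<nu>}"

definition wasserstein :: "real \<Rightarrow> real measure \<Rightarrow> real measure \<Rightarrow> ennreal" where
  "wasserstein p \<mu> \<nu> =
     (let c = (INF \<pi>\<in>couplings \<mu> \<nu>. \<integral>\<^sup>+ z. ennreal (\<bar>fst z - snd z\<bar> powr p) \<partial>\<pi>)
      in if c = \<infinity> then \<infinity> else ennreal (enn2real c powr (1 / p)))"

end

theory Submission
  imports Defs
begin

lemma sba_0: "sba G lo hi n 0 = lo"
proof (cases n)
  case (Suc m) then show ?thesis by (cases m) auto
qed simp

lemma sba_top: "1 \<le> n \<Longrightarrow> 2^n \<le> l \<Longrightarrow> sba G lo hi n l = hi"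
proof (cases n)
  case (Suc m) assume "2^n \<le> l"
  then show ?thesis using Suc by (cases m) auto
qed simp

lemma sba_even: "1 \<le> n \<Longrightarrow> k \<le> 2^n \<Longrightarrow> sba G lo hi (Suc n) (2*k) = sba G lo hi n k"
proof (cases n)
  case (Suc m) assume k: "k \<le> 2^n" and n: "1 \<le> n"
  show ?thesis
  proof (cases "k = 0")
    case True then show ?thesis using sba_0 by (simp add: Suc)
  next
    case False
    show ?thesis
    proof (cases "k = 2^n")
      case True then show ?thesis using sba_top[OF n, of k G lo hi] Suc by simp
    next
      case False
      with k have "k < 2^n" by simp
      then show ?thesis using Suc \<open>k \<noteq> 0\<close> by simp
    qed
  qed
qed simp

lemma sba_odd: "1 \<le> n \<Longrightarrow> k < 2^n \<Longrightarrow>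
   sba G lo hi (Suc n) (2*k+1) = bG G (sba G lo hi n k) (sba G lo hi n (k+1))"
proof (cases n)
  case (Suc m) assume k: "k < 2^n"
  then have "\<not> 2 ^ Suc (Suc m) \<le> 2*k+1" using Suc by simp
  then show ?thesis using Suc by simp
qed simp

lemma sba_1: "sba G lo hi (Suc 0) (Suc 0) = ereal (integral\<^sup>L G (\<lambda>x. x))" by simp
lemma sba_1_top: "2 \<le> l \<Longrightarrow> sba G lo hi (Suc 0) l = hi" by simp

definition Sset :: "ereal \<Rightarrow> ereal \<Rightarrow> real set" where
  "Sset c d = {x. c < ereal x \<and> ereal x \<le> d}"

lemma Sset_borel[measurable]: "Sset c d \<in> sets borel" unfolding Sset_def by measurable

locale sba_ctx = prob_space G for G :: "real measure" +
  fixes lo hi :: ereal and a b :: real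
  assumes sG: "sets G = sets borel"
    and Th: "emeasure G (Theta_set lo hi) = 1"
    and ab: "a < b"
    and supp: "msupp G = {a..b}"
    and lohi: "lo < hi"
begin

lemma space_G: "space G = UNIV" using sets_eq_imp_space_eq[OF sG] by simp

lemma setsG: "A \<in> sets borel \<Longrightarrow> A \<in> sets G" using sG by simp

lemma measG: "f \<in> borel_measurable borel \<Longrightarrow> f \<in> borel_measurable G"
  using measurable_cong_sets[OF sG refl, of borel] by blast

lemma compl_null: "UNIV - {a..b} \<in> null_sets G"
proof -
  define F where "F = {ball x e | x e. e > 0 \<and> emeasure G (ball x e) = 0}"
  have opF: "\<And>S. S \<in> F \<Longrightarrow> open S" unfolding F_def by auto
  have UF: "\<Union>F = UNIV - {a..b}"
  proof
    show "\<Union>F \<subseteq> UNIV - {a..b}"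
    proof
      fix y assume "y \<in> \<Union>F"
      then obtain x e where xe: "e > 0" "emeasure G (ball x e) = 0" "y \<in> ball x e"
        unfolding F_def by auto
      then obtain e' where e': "e' > 0" "ball y e' \<subseteq> ball x e"
        using openE[OF open_ball] by metis
      have "emeasure G (ball y e') \<le> emeasure G (ball x e)"
        by (rule emeasure_mono[OF e'(2)]) (simp add: setsG)
      then have "emeasure G (ball y e') = 0" using xe by simp
      hence "y \<notin> msupp G" unfolding msupp_def using e' by auto
      thus "y \<in> UNIV - {a..b}" using supp by auto
    qed
  next
    show "UNIV - {a..b} \<subseteq> \<Union>F"
    proof
      fix y assume "y \<in> UNIV - {a..b}"
      hence "y \<notin> msupp G" using supp by auto
      then obtain e where "e > 0" "\<not> emeasure G (ball y e) > 0" unfolding msupp_def by auto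
      hence "emeasure G (ball y e) = 0" by (simp add: not_gr_zero)
      thus "y \<in> \<Union>F" unfolding F_def using \<open>e>0\<close> by force
    qed
  qed
  obtain F' where F': "F' \<subseteq> F" "countable F'" "\<Union>F' = \<Union>F" using Lindelof[OF opF] by metis
  have "\<Union>((\<lambda>S. S) ` F') \<in> null_sets G"
  proof (rule null_sets_UN'[OF F'(2)])
    fix S assume "S \<in> F'"
    then have "S \<in> F" using F' by auto
    then obtain x e where "S = ball x e" "emeasure G (ball x e) = 0" unfolding F_def by auto
    then show "S \<in> null_sets G" by (simp add: null_sets_def setsG)
  qed
  then show ?thesis using F' UF by simp
qed

lemma AE_ab: "AE x in G. a \<le> x \<and> x \<le> b"
  by (rule AE_I'[OF compl_null]) auto

lemma null_outside: "S \<inter> {a..b} = {} \<Longrightarrow> S \<in> sets borel \<Longrightarrow> measure G S = 0"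
proof -
  assume "S \<inter> {a..b} = {}" "S \<in> sets borel"
  then have "S \<in> null_sets G" using null_sets_subset[OF compl_null, of S] setsG by auto
  then show ?thesis by (simp add: measure_def null_sets_def)
qed

lemma Theta_compl: "emeasure G (UNIV - Theta_set lo hi) = 0"
proof -
  have m: "Theta_set lo hi \<in> sets G" unfolding Theta_set_def by (rule setsG) measurable
  show ?thesis using emeasure_compl[OF m] Th emeasure_space_1 space_G by simp
qed

lemma in_supp_pos: "x \<in> {a..b} \<Longrightarrow> e > 0 \<Longrightarrow> emeasure G (ball x e) > 0"
  using supp unfolding msupp_def by auto

lemma lo_a: "lo \<le> ereal a"
proof (rule ccontr)
  assume "\<not> lo \<le> ereal a"
  then have "ereal a < lo" by simp
  moreover have "lo \<noteq> \<infinity>" using lohi by auto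
  ultimately obtain r where r: "lo = ereal r" "a < r" by (cases lo) auto
  have "ball a (r - a) \<subseteq> UNIV - Theta_set lo hi"
    using r by (auto simp: Theta_set_def ball_eq_greaterThanLessThan)
  then have "emeasure G (ball a (r - a)) \<le> emeasure G (UNIV - Theta_set lo hi)"
    by (intro emeasure_mono) (auto simp: setsG Theta_set_def)
  then have "emeasure G (ball a (r - a)) = 0" using Theta_compl by simp
  moreover have "emeasure G (ball a (r - a)) > 0" using in_supp_pos[of a "r - a"] ab r by simp
  ultimately show False by simp
qed

lemma b_hi: "ereal b \<le> hi"
proof (rule ccontr)
  assume "\<not> ereal b \<le> hi"
  then have "hi < ereal b" by simp
  moreover have "hi \<noteq> -\<infinity>" using lohi by auto
  ultimately obtain r where r: "hi = ereal r" "r < b" by (cases hi) auto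
  have "ball b (b - r) \<subseteq> UNIV - Theta_set lo hi"
    using r by (auto simp: Theta_set_def ball_eq_greaterThanLessThan)
  then have "emeasure G (ball b (b - r)) \<le> emeasure G (UNIV - Theta_set lo hi)"
    by (intro emeasure_mono) (auto simp: setsG Theta_set_def)
  then have "emeasure G (ball b (b - r)) = 0" using Theta_compl by simp
  moreover have "emeasure G (ball b (b - r)) > 0" using in_supp_pos[of b "b - r"] ab r by simp
  ultimately show False by simp
qed

lemma ab_Theta: "x \<in> {a..b} \<Longrightarrow> x \<in> Theta_set lo hi"
proof -
  assume "x \<in> {a..b}"
  then have "ereal a \<le> ereal x" "ereal x \<le> ereal b" by auto
  then have "lo \<le> ereal x" "ereal x \<le> hi" using lo_a b_hi by (meson order_trans)+
  then show ?thesis unfolding Theta_set_def by simp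
qed

lemma pos_open: "a \<le> s \<Longrightarrow> s < t \<Longrightarrow> t \<le> b \<Longrightarrow> measure G {s<..<t} > 0"
proof -
  assume st: "a \<le> s" "s < t" "t \<le> b"
  have "ball ((s+t)/2) ((t-s)/2) = {s<..<t}" by (simp add: ball_eq_greaterThanLessThan field_simps)
  moreover have "emeasure G (ball ((s+t)/2) ((t-s)/2)) > 0" using st by (intro in_supp_pos) auto
  ultimately have "emeasure G {s<..<t} > 0" by simp
  then show ?thesis using emeasure_eq_measure[of "{s<..<t}"] by simp
qed

lemma int_bdd: "(f::real\<Rightarrow>real) \<in> borel_measurable borel \<Longrightarrow> AE x in G. \<bar>f x\<bar> \<le> K \<Longrightarrow> integrable G f"
proof -
  assume f: "f \<in> borel_measurable borel" and K: "AE x in G. \<bar>f x\<bar> \<le> K"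
  show ?thesis
  proof (rule Bochner_Integration.integrable_bound[where f="\<lambda>x. K"])
    show "integrable G (\<lambda>x. K)" by simp
    show "f \<in> borel_measurable G" using measG[OF f] .
    show "AE x in G. norm (f x) \<le> norm K" using K by eventually_elim auto
  qed
qed


lemma int_ab: "(f::real\<Rightarrow>real) \<in> borel_measurable borel \<Longrightarrow> (\<And>x. a \<le> x \<Longrightarrow> x \<le> b \<Longrightarrow> \<bar>f x\<bar> \<le> K) \<Longrightarrow> integrable G f"
  by (rule int_bdd) (use AE_ab in \<open>auto elim!: AE_mp\<close>)

definition cl :: "ereal \<Rightarrow> real" where
  "cl e = (if e \<le> ereal a then a else if ereal b \<le> e then b else real_of_ereal e)"

lemma cl_range: "a \<le> cl e" "cl e \<le> b"
  using ab by (cases e; auto simp: cl_def)+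

lemma cl_mono: "e \<le> f \<Longrightarrow> cl e \<le> cl f"
  using ab by (cases e; cases f; auto simp: cl_def)

lemma cl_real: "a \<le> m \<Longrightarrow> m \<le> b \<Longrightarrow> cl (ereal m) = m"
  by (auto simp: cl_def)

lemma cl_ge: "c < ereal b \<Longrightarrow> c \<le> ereal (cl c)"
  by (cases c; auto simp: cl_def)

lemma cl_le: "ereal a \<le> d \<Longrightarrow> ereal (cl d) \<le> d"
  by (cases d; auto simp: cl_def)

lemma cl_below: "a \<le> x \<Longrightarrow> x \<le> b \<Longrightarrow> c \<le> ereal x \<Longrightarrow> cl c \<le> x"
  using cl_mono[of c "ereal x"] cl_real[of x] by simp

lemma cl_above: "a \<le> x \<Longrightarrow> x \<le> b \<Longrightarrow> ereal x \<le> d \<Longrightarrow> x \<le> cl d"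
  using cl_mono[of "ereal x" d] cl_real[of x] by simp

definition Iset :: "ereal \<Rightarrow> ereal \<Rightarrow> real" where
  "Iset c d = (\<integral>x. indicator (Sset c d) x * x \<partial>G)"

lemma int_ind: "integrable G (\<lambda>x. indicator (Sset c d) x * (x - k))"
  by (rule int_ab[where K="\<bar>a\<bar> + \<bar>b\<bar> + \<bar>k\<bar>"]) (auto simp: indicator_def)

lemma int_ind0: "integrable G (\<lambda>x. indicator (Sset c d) x * x)"
  by (rule int_ab[where K="\<bar>a\<bar> + \<bar>b\<bar>"]) (auto simp: indicator_def)

lemma int_ind1: "S \<in> sets borel \<Longrightarrow> integrable G (\<lambda>x. (k::real) * indicator S x)"
  by (rule int_ab[where K="\<bar>k\<bar>"]) (auto simp: indicator_def)

lemma shift: "(\<integral>x. indicator (Sset c d) x * (x - k) \<partial>G) = Iset c d - k * measure G (Sset c d)"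
proof -
  have "(\<lambda>x. indicator (Sset c d) x * (x - k)) = (\<lambda>x. indicator (Sset c d) x * x - k * indicator (Sset c d) x)"
    by (auto simp: fun_eq_iff algebra_simps)
  then have "(\<integral>x. indicator (Sset c d) x * (x - k) \<partial>G) = Iset c d - (\<integral>x. k * indicator (Sset c d) x \<partial>G)"
    unfolding Iset_def using int_ind0 int_ind1[of "Sset c d" k] by simp
  also have "(\<integral>x. k * indicator (Sset c d) x \<partial>G) = k * measure G (Sset c d)"
    using space_G by simp
  finally show ?thesis .
qed

lemma cdf_diff: "c \<le> d \<Longrightarrow> cdf_e G d - cdf_e G c = measure G (Sset c d)"
proof -
  assume cd: "c \<le> d"
  have "{x. ereal x \<le> d} = {x. ereal x \<le> c} \<union> Sset c d" using cd by (auto simp: Sset_def)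
  moreover have "{x. ereal x \<le> c} \<inter> Sset c d = {}" by (auto simp: Sset_def)
  moreover have "{x. ereal x \<le> c} \<in> sets G" by (rule setsG) measurable
  moreover have "Sset c d \<in> sets G" by (rule setsG) measurable
  ultimately have "measure G {x. ereal x \<le> d} = measure G {x. ereal x \<le> c} + measure G (Sset c d)"
    using finite_measure_Union by simp
  then show ?thesis unfolding cdf_e_def by simp
qed

lemma bG_zero: "c \<le> d \<Longrightarrow> measure G (Sset c d) = 0 \<Longrightarrow> bG G c d = c"
  using cdf_diff[of c d] unfolding bG_def by auto

lemma bG_pos: "c \<le> d \<Longrightarrow> 0 < measure G (Sset c d) \<Longrightarrow>
    bG G c d = ereal (Iset c d / measure G (Sset c d))"
  using cdf_diff[of c d] unfolding bG_def Iset_def Sset_def set_lebesgue_integral_def by auto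

lemma mean_in:
  assumes cd: "c \<le> d" and pos: "0 < measure G (Sset c d)"
  defines "m \<equiv> Iset c d / measure G (Sset c d)"
  shows "cl c \<le> m" "m \<le> cl d" "c \<le> ereal m" "ereal m \<le> d"
proof -
  let ?S = "Sset c d" let ?\<mu> = "measure G (Sset c d)"
  have "0 \<le> (\<integral>x. indicator ?S x * (x - cl c) \<partial>G)"
  proof (rule integral_nonneg_AE)
    show "AE x in G. 0 \<le> indicator ?S x * (x - cl c)"
      using AE_ab proof eventually_elim
      case (elim x) then show ?case
        using cl_below[of x c] by (auto simp: indicator_def Sset_def)
    qed
  qed
  then have "cl c * ?\<mu> \<le> Iset c d" using shift by simp
  then show l: "cl c \<le> m" unfolding m_def using pos by (simp add: pos_le_divide_eq)
  have "(\<integral>x. indicator ?S x * (x - cl d) \<partial>G) \<le> (\<integral>x. 0 \<partial>G)"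
  proof (rule integral_mono_AE)
    show "integrable G (\<lambda>x. indicator ?S x * (x - cl d))" by (rule int_ind)
    show "integrable G (\<lambda>x. 0::real)" by simp
    show "AE x in G. indicator ?S x * (x - cl d) \<le> 0"
      using AE_ab proof eventually_elim
      case (elim x) then show ?case
        using cl_above[of x d] by (auto simp: indicator_def Sset_def mult_le_0_iff)
    qed
  qed
  then have "Iset c d \<le> cl d * ?\<mu>" using shift by simp
  then show u: "m \<le> cl d" unfolding m_def using pos by (simp add: divide_le_eq)
  have "?S \<inter> {a..b} \<noteq> {}" using null_outside[of ?S] pos by auto
  then obtain x where x: "x \<in> ?S" "a \<le> x" "x \<le> b" by auto
  then have "c < ereal x" "ereal x \<le> d" by (auto simp: Sset_def)
  with x(2,3) have "c < ereal b" "ereal a \<le> d" by (meson ereal_less_eq(3) less_le_trans order_trans)+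
  then show "c \<le> ereal m" "ereal m \<le> d"
    using cl_ge cl_le l u by (meson ereal_less_eq(3) order_trans)+
qed

lemma bG_between: "c \<le> d \<Longrightarrow> c \<le> bG G c d \<and> bG G c d \<le> d"
proof -
  assume cd: "c \<le> d"
  show ?thesis
  proof (cases "measure G (Sset c d) = 0")
    case True then show ?thesis using bG_zero cd by simp
  next
    case False
    then have "0 < measure G (Sset c d)" using measure_nonneg[of G] by (simp add: less_le)
    then show ?thesis using bG_pos[OF cd] mean_in[OF cd] by simp
  qed
qed


lemma mean_ab: "a \<le> integral\<^sup>L G (\<lambda>x. x)" "integral\<^sup>L G (\<lambda>x. x) \<le> b"
proof -
  have S: "Sset (-\<infinity>) \<infinity> = UNIV" by (auto simp: Sset_def)
  have I: "Iset (-\<infinity>) \<infinity> = integral\<^sup>L G (\<lambda>x. x)" unfolding Iset_def S by simp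
  have m: "measure G (Sset (-\<infinity>) \<infinity>) = 1" unfolding S using prob_space space_G by simp
  have c1: "cl (-\<infinity>) = a" "cl \<infinity> = b" by (auto simp: cl_def)
  show "a \<le> integral\<^sup>L G (\<lambda>x. x)" "integral\<^sup>L G (\<lambda>x. x) \<le> b"
    using mean_in(1,2)[of "-\<infinity>" "\<infinity>"] m I c1 by simp_all
qed

lemma sba_mono_Suc: "\<forall>l. sba G lo hi (Suc n) l \<le> sba G lo hi (Suc n) (Suc l)"
proof (induction n)
  case 0
  have "lo \<le> ereal (integral\<^sup>L G (\<lambda>x. x))" using lo_a mean_ab(1) by (meson ereal_less_eq(3) order_trans)
  moreover have "ereal (integral\<^sup>L G (\<lambda>x. x)) \<le> hi" using b_hi mean_ab(2) by (meson ereal_less_eq(3) order_trans)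
  ultimately show ?case by simp
next
  case (Suc n)
  define n' where "n' = Suc n"
  have n1: "1 \<le> n'" unfolding n'_def by simp
  have IH: "\<And>l. sba G lo hi n' l \<le> sba G lo hi n' (Suc l)" using Suc unfolding n'_def by simp
  show ?case unfolding n'_def[symmetric]
  proof
    fix l
    show "sba G lo hi (Suc n') l \<le> sba G lo hi (Suc n') (Suc l)"
    proof (cases "even l")
      case True
      then obtain k where l: "l = 2*k" by (auto elim: evenE)
      show ?thesis
      proof (cases "k < 2^n'")
        case True
        have "sba G lo hi (Suc n') l = sba G lo hi n' k" using sba_even[OF n1] True l by simp
        moreover have "sba G lo hi (Suc n') (Suc l) = bG G (sba G lo hi n' k) (sba G lo hi n' (k+1))"
          using sba_odd[OF n1 True] l by simp
        ultimately show ?thesis using bG_between IH by simp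
      next
        case False
        then have "2^Suc n' \<le> l" "2^Suc n' \<le> Suc l" using l by auto
        then show ?thesis using sba_top[of "Suc n'"] by simp
      qed
    next
      case False
      then obtain k where l: "l = 2*k+1" by (auto elim: oddE)
      show ?thesis
      proof (cases "k < 2^n'")
        case True
        have "sba G lo hi (Suc n') l = bG G (sba G lo hi n' k) (sba G lo hi n' (k+1))"
          using sba_odd[OF n1 True] l by simp
        moreover have "sba G lo hi (Suc n') (Suc l) = sba G lo hi n' (k+1)"
          using sba_even[OF n1, of "k+1"] True l by (simp add: algebra_simps)
        ultimately show ?thesis using bG_between IH by simp
      next
        case False
        then have "2^Suc n' \<le> l" "2^Suc n' \<le> Suc l" using l by auto
        then show ?thesis using sba_top[of "Suc n'"] by simp
      qed
    qed
  qed
qed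

lemma sba_mono: "1 \<le> n \<Longrightarrow> i \<le> j \<Longrightarrow> sba G lo hi n i \<le> sba G lo hi n j"
proof -
  assume "1 \<le> n" "i \<le> j"
  then obtain m where "n = Suc m" by (cases n) auto
  then show ?thesis using lift_Suc_mono_le[of "sba G lo hi n", OF _ \<open>i \<le> j\<close>] sba_mono_Suc[of m] by simp
qed

lemma cell_disj: "1 \<le> n \<Longrightarrow> 1 \<le> l \<Longrightarrow> 1 \<le> l' \<Longrightarrow> x \<in> cell G lo hi n l \<Longrightarrow> x \<in> cell G lo hi n l' \<Longrightarrow> l = l'"
proof (rule ccontr)
  assume n: "1 \<le> n" and l: "1 \<le> l" "1 \<le> l'" and x: "x \<in> cell G lo hi n l" "x \<in> cell G lo hi n l'" and ne: "l \<noteq> l'"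
  have key: "\<And>i j. 1 \<le> i \<Longrightarrow> i < j \<Longrightarrow> x \<in> cell G lo hi n i \<Longrightarrow> x \<in> cell G lo hi n j \<Longrightarrow> False"
  proof -
    fix i j assume ij: "1 \<le> i" "i < j" and xi: "x \<in> cell G lo hi n i" and xj: "x \<in> cell G lo hi n j"
    have "ereal x \<le> sba G lo hi n i" using xi by (auto simp: cell_def split: if_splits)
    moreover have "sba G lo hi n (j - 1) < ereal x" using xj ij by (auto simp: cell_def split: if_splits)
    moreover have "sba G lo hi n i \<le> sba G lo hi n (j - 1)" using ij by (intro sba_mono[OF n]) auto
    ultimately show False by auto
  qed
  show False
  proof (cases "l < l'")
    case True show False by (rule key[OF l(1) True x])
  next
    case False then have "l' < l" using ne by simp
    then show False using key[OF l(2) _ x(2) x(1)] by simp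
  qed
qed

lemma cell_cover: "1 \<le> n \<Longrightarrow> x \<in> Theta_set lo hi \<Longrightarrow> \<exists>l\<in>{1..2^n}. x \<in> cell G lo hi n l"
proof -
  assume n: "1 \<le> n" and x: "x \<in> Theta_set lo hi"
  then have xlo: "lo \<le> ereal x" and xhi: "ereal x \<le> hi" by (auto simp: Theta_set_def)
  have P: "ereal x \<le> sba G lo hi n (2^n)" using sba_top[OF n, of "2^n"] xhi by simp
  define l0 where "l0 = (LEAST l. ereal x \<le> sba G lo hi n l)"
  have l0: "ereal x \<le> sba G lo hi n l0" unfolding l0_def by (rule LeastI[of "\<lambda>l. ereal x \<le> sba G lo hi n l", OF P])
  have l0le: "l0 \<le> 2^n" unfolding l0_def by (rule Least_le[of "\<lambda>l. ereal x \<le> sba G lo hi n l", OF P])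
  have s01: "sba G lo hi n 0 \<le> sba G lo hi n 1" by (rule sba_mono[OF n]) simp
  show ?thesis
  proof (cases "l0 \<le> 1")
    case True
    then have "ereal x \<le> sba G lo hi n 1" using l0 sba_mono[OF n, of l0 1] by auto
    then have "x \<in> cell G lo hi n 1" using xlo by (simp add: cell_def sba_0)
    moreover have "(1::nat) \<in> {1..2^n}" by simp
    ultimately show ?thesis by blast
  next
    case False
    then have "\<not> ereal x \<le> sba G lo hi n (l0 - 1)" unfolding l0_def
      using not_less_Least[of "l0 - 1" "\<lambda>l. ereal x \<le> sba G lo hi n l"] l0_def by auto
    then have "x \<in> cell G lo hi n l0" using l0 False by (auto simp: cell_def)
    then show ?thesis using False l0le by auto
  qed
qed

lemma cell_sub: "1 \<le> n \<Longrightarrow> l \<in> {1..2^n} \<Longrightarrow> cell G lo hi n l \<subseteq> Theta_set lo hi"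
proof
  fix x assume n: "1 \<le> n" and l: "l \<in> {1..2^n}" and x: "x \<in> cell G lo hi n l"
  have "sba G lo hi n l \<le> sba G lo hi n (2^n)" using l by (intro sba_mono[OF n]) auto
  then have hi: "sba G lo hi n l \<le> hi" using sba_top[OF n, of "2^n"] by simp
  have lo: "lo \<le> sba G lo hi n (l - 1)" using sba_mono[OF n, of 0 "l - 1"] by (simp add: sba_0)
  show "x \<in> Theta_set lo hi"
    using x hi lo unfolding Theta_set_def cell_def
    by (auto split: if_splits simp: sba_0 intro: order_trans less_imp_le dest: order.strict_trans1)
qed


lemma cell_borel[measurable]: "cell G lo hi n l \<in> sets borel"
  unfolding cell_def by (cases "l = 1") (simp_all, measurable)

definition pt :: "nat \<Rightarrow> nat \<Rightarrow> real" where
  "pt n l = real_of_ereal (sba G lo hi (Suc n) (2 * l - 1))"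

definition Tm :: "nat \<Rightarrow> real \<Rightarrow> real" where
  "Tm n x = (\<Sum>l\<in>{1..2^n}. indicator (cell G lo hi n l) x * pt n l)"

lemma Tm_borel[measurable]: "Tm n \<in> borel_measurable borel"
  unfolding Tm_def by measurable

lemma pt_bG: "1 \<le> n \<Longrightarrow> l \<in> {1..2^n} \<Longrightarrow>
   pt n l = real_of_ereal (bG G (sba G lo hi n (l - 1)) (sba G lo hi n l))"
proof -
  assume n: "1 \<le> n" and l: "l \<in> {1..2^n}"
  then have "l - 1 < 2^n" "2 * l - 1 = 2 * (l - 1) + 1" "l - 1 + 1 = l" by auto
  then show ?thesis unfolding pt_def using sba_odd[OF n, of "l - 1"] by simp
qed

lemma Tm_cell: "1 \<le> n \<Longrightarrow> l \<in> {1..2^n} \<Longrightarrow> x \<in> cell G lo hi n l \<Longrightarrow> Tm n x = pt n l"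
proof -
  assume n: "1 \<le> n" and l: "l \<in> {1..2^n}" and x: "x \<in> cell G lo hi n l"
  have "Tm n x = indicator (cell G lo hi n l) x * pt n l
      + (\<Sum>l'\<in>{1..2^n} - {l}. indicator (cell G lo hi n l') x * pt n l')"
    unfolding Tm_def by (rule sum.remove) (use l in simp_all)
  also have "(\<Sum>l'\<in>{1..2^n} - {l}. indicator (cell G lo hi n l') x * pt n l') = 0"
  proof (rule sum.neutral, rule ballI)
    fix l' assume l': "l' \<in> {1..2^n} - {l}"
    then have "x \<notin> cell G lo hi n l'" using cell_disj[OF n, of l l' x] l x by auto
    then show "indicator (cell G lo hi n l') x * pt n l' = 0" by simp
  qed
  finally show ?thesis using x by simp
qed

lemma cell_S: "x \<in> cell G lo hi n l \<Longrightarrow> x \<notin> Sset (sba G lo hi n (l - 1)) (sba G lo hi n l) \<Longrightarrow>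
   l = 1 \<and> ereal x = sba G lo hi n 0"
  unfolding cell_def Sset_def by (auto split: if_splits)

lemma cell_bounds: "x \<in> cell G lo hi n l \<Longrightarrow> sba G lo hi n (l - 1) \<le> ereal x \<and> ereal x \<le> sba G lo hi n l"
  unfolding cell_def by (auto split: if_splits)

lemma Tm_close:
  assumes n: "1 \<le> n" and W: "\<And>l. l \<in> {1..2^n} \<Longrightarrow> cl (sba G lo hi n l) - cl (sba G lo hi n (l - 1)) \<le> W"
  shows "AE x in G. \<bar>Tm n x - x\<bar> \<le> W"
proof -
  let ?S = "\<lambda>l. Sset (sba G lo hi n (l - 1)) (sba G lo hi n l)"
  have AEn: "AE x in G. \<forall>l\<in>{1..2^n}. measure G (?S l) = 0 \<longrightarrow> x \<notin> ?S l"
  proof (rule AE_finite_allI)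
    fix l
    show "AE x in G. measure G (?S l) = 0 \<longrightarrow> x \<notin> ?S l"
    proof (cases "measure G (?S l) = 0")
      case True
      then have "?S l \<in> null_sets G"
        using setsG[OF Sset_borel] by (simp add: null_sets_def emeasure_eq_measure)
      then have "AE x in G. x \<notin> ?S l" by (rule AE_not_in)
      then show ?thesis by eventually_elim simp
    qed simp
  qed simp
  show ?thesis
    using AEn AE_ab
  proof eventually_elim
    case (elim x)
    then have "x \<in> Theta_set lo hi" using ab_Theta by auto
    then obtain l where l: "l \<in> {1..2^n}" and x: "x \<in> cell G lo hi n l" using cell_cover[OF n] by blast
    define c where "c = sba G lo hi n (l - 1)"
    define d where "d = sba G lo hi n l"
    have cd: "c \<le> d" unfolding c_def d_def by (rule sba_mono[OF n]) simp
    have T: "Tm n x = real_of_ereal (bG G c d)" using Tm_cell[OF n l x] pt_bG[OF n l] c_def d_def by simp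
    have W0: "0 \<le> W" using W[OF l] cl_mono[OF cd] c_def d_def by simp
    show ?case
    proof (cases "measure G (Sset c d) = 0")
      case True
      then have "x \<notin> Sset c d" using elim l c_def d_def by auto
      then have "l = 1 \<and> ereal x = c" using cell_S[OF x] c_def d_def by (simp add: sba_0)
      then have "bG G c d = ereal x" using bG_zero[OF cd True] by simp
      then show ?thesis using T W0 by simp
    next
      case False
      then have pos: "0 < measure G (Sset c d)" using measure_nonneg[of G] by (simp add: less_le)
      define m where "m = Iset c d / measure G (Sset c d)"
      have "Tm n x = m" using T bG_pos[OF cd pos] m_def by simp
      moreover have "cl c \<le> m" "m \<le> cl d" using mean_in[OF cd pos] m_def by simp_all
      moreover have "cl c \<le> x" "x \<le> cl d" using cell_bounds[OF x] elim cl_below cl_above c_def d_def by auto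
      moreover have "cl d - cl c \<le> W" using W[OF l] c_def d_def by simp
      ultimately show ?thesis by linarith
    qed
  qed
qed


lemma grid:
  assumes h: "h > 0"
  shows "\<exists>g>0. \<forall>s. a \<le> s \<longrightarrow> s + h \<le> b \<longrightarrow> g \<le> measure G {s<..s+h}"
proof -
  define N where "N = nat \<lceil>2*(b-a)/h\<rceil>"
  have N1: "2*(b-a)/h \<le> real N" unfolding N_def by (rule real_nat_ceiling_ge)
  have "0 < 2*(b-a)/h" using ab h by simp
  then have Npos: "0 < N" using N1 by linarith
  define \<delta> where "\<delta> = (b-a)/N"
  have dpos: "0 < \<delta>" unfolding \<delta>_def using ab Npos by simp
  have "2*(b-a) \<le> h * real N" using N1 h by (simp add: divide_le_eq mult.commute)
  then have dh: "2 * \<delta> \<le> h" unfolding \<delta>_def using Npos by (simp add: field_simps)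
  have dN: "real N * \<delta> = b - a" unfolding \<delta>_def using Npos by simp
  define t where "t k = a + real k * \<delta>" for k :: nat
  define g where "g = Min ((\<lambda>k. measure G {t k<..<t (Suc k)}) ` {..<N})"
  have gpos: "0 < g" unfolding g_def
  proof (subst Min_gr_iff)
    show "finite ((\<lambda>k. measure G {t k<..<t (Suc k)}) ` {..<N})" by simp
    show "(\<lambda>k. measure G {t k<..<t (Suc k)}) ` {..<N} \<noteq> {}" using Npos by auto
    show "\<forall>x\<in>(\<lambda>k. measure G {t k<..<t (Suc k)}) ` {..<N}. 0 < x"
    proof
      fix y assume "y \<in> (\<lambda>k. measure G {t k<..<t (Suc k)}) ` {..<N}"
      then obtain k where k: "k < N" "y = measure G {t k<..<t (Suc k)}" by auto
      have "real (Suc k) * \<delta> \<le> real N * \<delta>" using k dpos by (intro mult_right_mono) auto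
      then have "t (Suc k) \<le> b" unfolding t_def using dN by simp
      moreover have "a \<le> t k" unfolding t_def using dpos by simp
      moreover have "t k < t (Suc k)" unfolding t_def using dpos by (simp add: algebra_simps)
      ultimately show "0 < y" using pos_open k by simp
    qed
  qed
  have "\<forall>s. a \<le> s \<longrightarrow> s + h \<le> b \<longrightarrow> g \<le> measure G {s<..s+h}"
  proof (intro allI impI)
    fix s assume s: "a \<le> s" "s + h \<le> b"
    define k where "k = nat \<lceil>(s-a)/\<delta>\<rceil>"
    have q0: "0 \<le> (s-a)/\<delta>" using s dpos by simp
    have kq: "real k = of_int \<lceil>(s-a)/\<delta>\<rceil>" unfolding k_def using q0 by simp
    have k1: "(s-a)/\<delta> \<le> real k" using kq by simp
    have k2: "real k < (s-a)/\<delta> + 1" using kq ceiling_correct[of "(s-a)/\<delta>"] by linarith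
    have tk: "s \<le> t k" using k1 dpos unfolding t_def by (simp add: divide_le_eq)
    have "real k * \<delta> < ((s-a)/\<delta> + 1) * \<delta>" using k2 dpos by (intro mult_strict_right_mono) auto
    moreover have "((s-a)/\<delta> + 1) * \<delta> = s - a + \<delta>" using dpos by (simp add: field_simps)
    ultimately have "real k * \<delta> < s - a + \<delta>" by simp
    then have tk1: "t (Suc k) < s + h" unfolding t_def using dh by (simp add: algebra_simps)
    have "k < N"
    proof (rule ccontr)
      assume "\<not> k < N"
      then have "real N * \<delta> \<le> real k * \<delta>" using dpos by (intro mult_right_mono) auto
      moreover have "t (Suc k) = a + real k * \<delta> + \<delta>" unfolding t_def by (simp add: algebra_simps)
      ultimately show False using tk1 s dN dpos by linarith
    qed
    then have "g \<le> measure G {t k<..<t (Suc k)}" unfolding g_def by (intro Min_le) auto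
    also have "\<dots> \<le> measure G {s<..s+h}"
      by (rule finite_measure_mono) (use tk tk1 in \<open>auto simp: setsG\<close>)
    finally show "g \<le> measure G {s<..s+h}" .
  qed
  then show ?thesis using gpos by blast
qed


lemma keyK:
  assumes cd: "c \<le> d" and eta: "0 < \<eta>" and gpos: "0 < g"
    and gr: "\<forall>s. a \<le> s \<longrightarrow> s + \<eta>/2 \<le> b \<longrightarrow> g \<le> measure G {s<..s+\<eta>/2}"
    and wide: "cl c + \<eta> \<le> cl d"
  defines "m \<equiv> Iset c d / measure G (Sset c d)"
  shows "0 < measure G (Sset c d)" "\<eta>/2*g \<le> m - cl c" "\<eta>/2*g \<le> cl d - m"
proof -
  let ?S = "Sset c d" let ?\<mu> = "measure G (Sset c d)"
  define c' where "c' = cl c"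
  define d' where "d' = cl d"
  have cb: "c < ereal b"
  proof (rule ccontr)
    assume "\<not> c < ereal b"
    then have "cl c = b" using ab unfolding cl_def by (cases c) (auto simp: not_less)
    then show False using wide cl_range(2)[of d] eta by simp
  qed
  have ad: "ereal a \<le> d"
  proof (rule ccontr)
    assume "\<not> ereal a \<le> d"
    then have "cl d = a" unfolding cl_def by (auto simp: not_le)
    then show False using wide cl_range(1)[of c] eta by simp
  qed
  have sub: "{c'<..d'} \<subseteq> ?S"
  proof
    fix y assume y: "y \<in> {c'<..d'}"
    have "c < ereal y" using cl_ge[OF cb] y unfolding c'_def by (auto intro: le_less_trans)
    moreover have "ereal y \<le> d" using cl_le[OF ad] y unfolding d'_def by (meson ereal_less_eq(3) greaterThanAtMost_iff order_trans)
    ultimately show "y \<in> ?S" by (simp add: Sset_def)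
  qed
  have ca: "a \<le> c'" "d' \<le> b" unfolding c'_def d'_def using cl_range by auto
  have wide': "c' + \<eta> \<le> d'" using wide c'_def d'_def by simp
  define J1 where "J1 = {d' - \<eta>/2<..d' - \<eta>/2 + \<eta>/2}"
  define J2 where "J2 = {c'<..c' + \<eta>/2}"
  have J1g: "g \<le> measure G J1" unfolding J1_def using gr[rule_format, of "d' - \<eta>/2"] ca wide' eta by linarith
  have J2g: "g \<le> measure G J2" unfolding J2_def using gr ca wide' eta by auto
  have J1S: "J1 \<subseteq> ?S" using sub wide' eta unfolding J1_def by auto
  have J2S: "J2 \<subseteq> ?S" using sub wide' eta unfolding J2_def by auto
  have "measure G J1 \<le> ?\<mu>" by (rule finite_measure_mono[OF J1S]) (simp add: setsG)
  then show pos: "0 < ?\<mu>" using J1g gpos by linarith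
  have mu1: "?\<mu> \<le> 1" by simp
  have "(\<integral>x. \<eta>/2 * indicator J1 x \<partial>G) \<le> (\<integral>x. indicator ?S x * (x - c') \<partial>G)"
  proof (rule integral_mono_AE)
    show "integrable G (\<lambda>x. \<eta>/2 * indicator J1 x)" by (rule int_ind1) (simp add: J1_def)
    show "integrable G (\<lambda>x. indicator ?S x * (x - c'))" by (rule int_ind)
    show "AE x in G. \<eta>/2 * indicator J1 x \<le> indicator ?S x * (x - c')"
      using AE_ab proof eventually_elim
      case (elim x)
      show ?case
      proof (cases "x \<in> J1")
        case True
        then have "x \<in> ?S" using J1S by auto
        moreover have "\<eta>/2 \<le> x - c'" using True wide' unfolding J1_def by auto
        ultimately show ?thesis using True by simp
      next
        case False
        have "x \<in> ?S \<Longrightarrow> c' \<le> x" using cl_below[of x c] elim unfolding c'_def Sset_def by auto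
        then show ?thesis using False by (auto simp: indicator_def)
      qed
    qed
  qed
  then have "\<eta>/2 * measure G J1 \<le> Iset c d - c' * ?\<mu>" using shift space_G by simp
  moreover have "\<eta>/2 * g \<le> \<eta>/2 * measure G J1" using J1g eta by simp
  ultimately have X1: "\<eta>/2 * g \<le> Iset c d - c' * ?\<mu>" by linarith
  have "(Iset c d - c' * ?\<mu>) * ?\<mu> \<le> Iset c d - c' * ?\<mu>"
  proof -
    have "0 < \<eta>/2*g" using eta gpos by simp
    then have "0 \<le> Iset c d - c' * ?\<mu>" using X1 by linarith
    then show ?thesis using mult_left_le[OF mu1] by blast
  qed
  then have "Iset c d - c' * ?\<mu> \<le> (Iset c d - c' * ?\<mu>) / ?\<mu>" using pos by (simp add: le_divide_eq)
  also have "(Iset c d - c' * ?\<mu>) / ?\<mu> = m - c'" unfolding m_def using pos by (simp add: field_simps)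
  finally show "\<eta>/2*g \<le> m - cl c" using X1 c'_def by simp
  have "(\<integral>x. indicator ?S x * (x - d') \<partial>G) \<le> (\<integral>x. - (\<eta>/2) * indicator J2 x \<partial>G)"
  proof (rule integral_mono_AE)
    show "integrable G (\<lambda>x. - (\<eta>/2) * indicator J2 x)" by (rule int_ind1) (simp add: J2_def)
    show "integrable G (\<lambda>x. indicator ?S x * (x - d'))" by (rule int_ind)
    show "AE x in G. indicator ?S x * (x - d') \<le> - (\<eta>/2) * indicator J2 x"
      using AE_ab proof eventually_elim
      case (elim x)
      show ?case
      proof (cases "x \<in> J2")
        case True
        then have "x \<in> ?S" using J2S by auto
        moreover have "x - d' \<le> - (\<eta>/2)" using True wide' unfolding J2_def by auto
        ultimately show ?thesis using True by simp
      next
        case False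
        have "x \<in> ?S \<Longrightarrow> x \<le> d'" using cl_above[of x d] elim unfolding d'_def Sset_def by auto
        then show ?thesis using False by (auto simp: indicator_def mult_le_0_iff)
      qed
    qed
  qed
  then have "Iset c d - d' * ?\<mu> \<le> - (\<eta>/2) * measure G J2" using shift space_G by simp
  moreover have "\<eta>/2 * g \<le> \<eta>/2 * measure G J2" using J2g eta by simp
  ultimately have X2: "\<eta>/2 * g \<le> d' * ?\<mu> - Iset c d" by linarith
  have "(d' * ?\<mu> - Iset c d) * ?\<mu> \<le> d' * ?\<mu> - Iset c d"
  proof -
    have "0 < \<eta>/2*g" using eta gpos by simp
    then have "0 \<le> d' * ?\<mu> - Iset c d" using X2 by linarith
    then show ?thesis using mult_left_le[OF mu1] by blast
  qed
  then have "d' * ?\<mu> - Iset c d \<le> (d' * ?\<mu> - Iset c d) / ?\<mu>" using pos by (simp add: le_divide_eq)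
  also have "(d' * ?\<mu> - Iset c d) / ?\<mu> = d' - m" unfolding m_def using pos by (simp add: field_simps)
  finally show "\<eta>/2*g \<le> cl d - m" using X2 d'_def by simp
qed

lemma width_step:
  assumes cd: "c \<le> d" and eta: "0 < \<eta>" and gpos: "0 < g"
    and gr: "\<forall>s. a \<le> s \<longrightarrow> s + \<eta>/2 \<le> b \<longrightarrow> g \<le> measure G {s<..s+\<eta>/2}"
  shows "cl (bG G c d) - cl c \<le> max \<eta> (cl d - cl c - \<eta>/2*g)"
    "cl d - cl (bG G c d) \<le> max \<eta> (cl d - cl c - \<eta>/2*g)"
proof -
  have bt: "c \<le> bG G c d" "bG G c d \<le> d" using bG_between[OF cd] by auto
  have "cl (bG G c d) - cl c \<le> max \<eta> (cl d - cl c - \<eta>/2*g) \<and> cl d - cl (bG G c d) \<le> max \<eta> (cl d - cl c - \<eta>/2*g)"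
  proof (cases "cl c + \<eta> \<le> cl d")
    case True
    note K = keyK[OF cd eta gpos gr True]
    define m where "m = Iset c d / measure G (Sset c d)"
    have bm: "bG G c d = ereal m" using bG_pos[OF cd K(1)] m_def by simp
    have "cl c \<le> m" "m \<le> cl d" using mean_in[OF cd K(1)] m_def by auto
    then have "cl (ereal m) = m" using cl_range[of c] cl_range[of d] by (intro cl_real) auto
    then have e: "cl (bG G c d) = m" using bm by simp
    have "m - cl c \<le> cl d - cl c - \<eta>/2*g" "cl d - m \<le> cl d - cl c - \<eta>/2*g"
      using K(2,3) unfolding m_def by linarith+
    then show ?thesis unfolding e le_max_iff_disj by simp
  next
    case False
    then show ?thesis using cl_mono[OF bt(1)] cl_mono[OF bt(2)] by auto
  qed
  then show "cl (bG G c d) - cl c \<le> max \<eta> (cl d - cl c - \<eta>/2*g)"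
    "cl d - cl (bG G c d) \<le> max \<eta> (cl d - cl c - \<eta>/2*g)" by auto
qed


lemma max_arith: "0 \<le> (\<kappa>::real) \<Longrightarrow> w \<le> max \<eta> X \<Longrightarrow> max \<eta> (w - \<kappa>) \<le> max \<eta> (X - \<kappa>)"
  by (auto simp: max_def split: if_splits)

lemma width_bound:
  assumes eta: "0 < \<eta>" and gpos: "0 < g"
    and gr: "\<forall>s. a \<le> s \<longrightarrow> s + \<eta>/2 \<le> b \<longrightarrow> g \<le> measure G {s<..s+\<eta>/2}"
  shows "\<forall>l\<in>{1..2^Suc n}. cl (sba G lo hi (Suc n) l) - cl (sba G lo hi (Suc n) (l - 1))
           \<le> max \<eta> (b - a - real n * (\<eta>/2*g))"
proof (induction n)
  case 0
  have H: "cl x - cl y \<le> max \<eta> (b - a)" for x y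
    using cl_range(2)[of x] cl_range(1)[of y] by (intro max.coboundedI2) linarith
  show ?case using H by simp
next
  case (Suc n)
  define n' where "n' = Suc n"
  have n1: "1 \<le> n'" unfolding n'_def by simp
  let ?\<kappa> = "\<eta>/2*g"
  have kap: "0 \<le> ?\<kappa>" using eta gpos by simp
  have IH: "\<And>k. k \<in> {1..2^n'} \<Longrightarrow> cl (sba G lo hi n' k) - cl (sba G lo hi n' (k - 1)) \<le> max \<eta> (b - a - real n * ?\<kappa>)"
    using Suc unfolding n'_def by blast
  have fin: "max \<eta> (b - a - real n * ?\<kappa> - ?\<kappa>) = max \<eta> (b - a - real n' * ?\<kappa>)"
  proof -
    have "b - a - real n * ?\<kappa> - ?\<kappa> = b - a - real n' * ?\<kappa>" by (simp add: algebra_simps n'_def)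
    then show ?thesis by (rule arg_cong)
  qed
  show ?case unfolding n'_def[symmetric]
  proof
    fix l :: nat assume l: "l \<in> {1..2^Suc n'}"
    show "cl (sba G lo hi (Suc n') l) - cl (sba G lo hi (Suc n') (l - 1)) \<le> max \<eta> (b - a - real n' * ?\<kappa>)"
    proof (cases "even l")
      case True
      then obtain k where lk: "l = 2*k" by (auto elim: evenE)
      then have k: "k \<in> {1..2^n'}" using l by auto
      define c where "c = sba G lo hi n' (k - 1)"
      define d where "d = sba G lo hi n' k"
      have cd: "c \<le> d" unfolding c_def d_def by (rule sba_mono[OF n1]) simp
      have e1: "sba G lo hi (Suc n') l = d" unfolding d_def lk using sba_even[OF n1] k by simp
      have "l - 1 = 2*(k-1)+1" "k - 1 < 2^n'" "k - 1 + 1 = k" using lk k by auto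
      then have e2: "sba G lo hi (Suc n') (l - 1) = bG G c d" unfolding c_def d_def using sba_odd[OF n1, of "k-1"] by simp
      have "cl d - cl (bG G c d) \<le> max \<eta> (cl d - cl c - ?\<kappa>)" by (rule width_step(2)[OF cd eta gpos gr])
      also have "\<dots> \<le> max \<eta> (b - a - real n * ?\<kappa> - ?\<kappa>)" using max_arith[OF kap IH[OF k]] c_def d_def by simp
      finally show ?thesis using e1 e2 fin by simp
    next
      case False
      then obtain k0 where lk: "l = 2*k0+1" by (auto elim: oddE)
      then have k0: "k0 < 2^n'" using l by auto
      define c where "c = sba G lo hi n' k0"
      define d where "d = sba G lo hi n' (k0 + 1)"
      have k: "k0 + 1 \<in> {1..2^n'}" using k0 by auto
      have cd: "c \<le> d" unfolding c_def d_def by (rule sba_mono[OF n1]) simp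
      have e1: "sba G lo hi (Suc n') l = bG G c d" unfolding c_def d_def lk using sba_odd[OF n1 k0] by simp
      have e2: "sba G lo hi (Suc n') (l - 1) = c" unfolding c_def lk using sba_even[OF n1, of k0] k0 by simp
      have "cl (bG G c d) - cl c \<le> max \<eta> (cl d - cl c - ?\<kappa>)" by (rule width_step(1)[OF cd eta gpos gr])
      also have "\<dots> \<le> max \<eta> (b - a - real n * ?\<kappa> - ?\<kappa>)" using max_arith[OF kap IH[OF k]] c_def d_def by simp
      finally show ?thesis using e1 e2 fin by simp
    qed
  qed
qed

lemma widths_small:
  assumes eta: "0 < \<eta>"
  shows "\<exists>n\<ge>1. \<forall>l\<in>{1..2^n}. cl (sba G lo hi n l) - cl (sba G lo hi n (l - 1)) \<le> \<eta>"
proof -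
  obtain g where gpos: "0 < g" and gr: "\<forall>s. a \<le> s \<longrightarrow> s + \<eta>/2 \<le> b \<longrightarrow> g \<le> measure G {s<..s+\<eta>/2}"
    using grid[of "\<eta>/2"] eta by auto
  define \<kappa> where "\<kappa> = \<eta>/2*g"
  have kpos: "0 < \<kappa>" unfolding \<kappa>_def using eta gpos by simp
  define N where "N = nat \<lceil>(b-a)/\<kappa>\<rceil>"
  have "(b-a)/\<kappa> \<le> real N" unfolding N_def by (rule real_nat_ceiling_ge)
  then have "b - a \<le> real N * \<kappa>" using kpos by (simp add: divide_le_eq)
  then have "max \<eta> (b - a - real N * \<kappa>) = \<eta>" using eta by simp
  then show ?thesis using width_bound[OF eta gpos gr, of N] unfolding \<kappa>_def by (intro exI[of _ "Suc N"]) auto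
qed

lemma barcell_eq: "emeasure G (barcell G lo hi n l) = emeasure G (cell G lo hi n l)"
proof -
  have "cell G lo hi n l \<inter> msupp G = cell G lo hi n l - (UNIV - {a..b})" using supp by auto
  then show ?thesis unfolding barcell_def
    using emeasure_Diff_null_set[OF compl_null, of "cell G lo hi n l"] setsG[OF cell_borel] by auto
qed

lemma approx_eq: "1 \<le> n \<Longrightarrow> approx_meas G lo hi n = distr G borel (Tm n)"
proof -
  assume n: "1 \<le> n"
  define D where "D = distr G borel (Tm n)"
  have TmG: "Tm n \<in> G \<rightarrow>\<^sub>M borel" using measG[OF Tm_borel] .
  have em: "emeasure D A = (\<Sum>l\<in>{1..2^n}. emeasure G (barcell G lo hi n l) * indicator A (pt n l))"
    if A: "A \<in> sets borel" for A
  proof -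
    let ?X = "Tm n -` A"
    have Xs: "?X \<in> sets G" using measurable_sets[OF TmG A] space_G by simp
    have TN: "UNIV - Theta_set lo hi \<in> null_sets G"
      using Theta_compl by (simp add: null_sets_def setsG Theta_set_def)
    have "emeasure D A = emeasure G ?X" unfolding D_def using emeasure_distr[OF TmG A] space_G by simp
    also have "\<dots> = emeasure G (?X - (UNIV - Theta_set lo hi))"
      using emeasure_Diff_null_set[OF TN Xs] by simp
    also have "?X - (UNIV - Theta_set lo hi) = (\<Union>l\<in>{1..2^n}. ?X \<inter> cell G lo hi n l)"
    proof
      show "?X - (UNIV - Theta_set lo hi) \<subseteq> (\<Union>l\<in>{1..2^n}. ?X \<inter> cell G lo hi n l)"
        using cell_cover[OF n] by blast
      show "(\<Union>l\<in>{1..2^n}. ?X \<inter> cell G lo hi n l) \<subseteq> ?X - (UNIV - Theta_set lo hi)"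
        using cell_sub[OF n] by blast
    qed
    also have "emeasure G (\<Union>l\<in>{1..2^n}. ?X \<inter> cell G lo hi n l) = (\<Sum>l\<in>{1..2^n}. emeasure G (?X \<inter> cell G lo hi n l))"
    proof (rule sum_emeasure[symmetric])
      show "(\<lambda>l. ?X \<inter> cell G lo hi n l) ` {1..2^n} \<subseteq> sets G" using Xs setsG[OF cell_borel] by auto
      show "disjoint_family_on (\<lambda>l. ?X \<inter> cell G lo hi n l) {1..2^n}"
        unfolding disjoint_family_on_def using cell_disj[OF n] by auto
    qed simp
    also have "\<dots> = (\<Sum>l\<in>{1..2^n}. emeasure G (barcell G lo hi n l) * indicator A (pt n l))"
    proof (rule sum.cong[OF refl])
      fix l :: nat assume l: "l \<in> {1..2^n}"
      have "?X \<inter> cell G lo hi n l = (if pt n l \<in> A then cell G lo hi n l else {})"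
        using Tm_cell[OF n l] by auto
      then show "emeasure G (?X \<inter> cell G lo hi n l) = emeasure G (barcell G lo hi n l) * indicator A (pt n l)"
        using barcell_eq by (simp add: indicator_def)
    qed
    finally show ?thesis .
  qed
  have "approx_meas G lo hi n = measure_of UNIV (sets borel) (emeasure D)"
    unfolding approx_meas_def
  proof (rule measure_of_eq)
    show "sets borel \<subseteq> Pow UNIV" by simp
    fix A :: "real set" assume "A \<in> sigma_sets UNIV (sets borel)"
    then have "A \<in> sets borel" by (metis sets.sigma_sets_eq space_borel)
    then show "(\<Sum>l\<in>{1..2^n}. emeasure G (barcell G lo hi n l) * indicator A (real_of_ereal (sba G lo hi (Suc n) (2 * l - 1))))
      = emeasure D A" using em unfolding pt_def by simp
  qed
  also have "\<dots> = D" using measure_of_of_measure[of D] unfolding D_def by simp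
  finally show ?thesis unfolding D_def .
qed


lemma W_bound:
  assumes n: "1 \<le> n" and p: "1 \<le> p" and eta: "0 < \<eta>"
    and close: "AE x in G. \<bar>Tm n x - x\<bar> \<le> \<eta>"
  shows "wasserstein p (approx_meas G lo hi n) G \<le> ennreal \<eta>"
proof -
  define f where "f x = (Tm n x, x)" for x
  have fm: "f \<in> G \<rightarrow>\<^sub>M (borel :: (real \<times> real) measure)"
  proof -
    have "f \<in> borel \<rightarrow>\<^sub>M (borel \<Otimes>\<^sub>M borel)" unfolding f_def by measurable
    then have "f \<in> borel \<rightarrow>\<^sub>M (borel :: (real \<times> real) measure)" by (simp add: borel_prod)
    then show ?thesis using measurable_cong_sets[OF sG refl] by blast
  qed
  define \<pi> where "\<pi> = distr G (borel :: (real \<times> real) measure) f"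
  have fstm: "fst \<in> (borel :: (real \<times> real) measure) \<rightarrow>\<^sub>M (borel :: real measure)"
    using measurable_fst[of "borel :: real measure" "borel :: real measure"] by (simp add: borel_prod)
  have sndm: "snd \<in> (borel :: (real \<times> real) measure) \<rightarrow>\<^sub>M (borel :: real measure)"
    using measurable_snd[of "borel :: real measure" "borel :: real measure"] by (simp add: borel_prod)
  have c1: "distr \<pi> borel fst = approx_meas G lo hi n"
  proof -
    have "distr \<pi> borel fst = distr G borel (fst \<circ> f)" unfolding \<pi>_def by (rule distr_distr[OF fstm fm])
    also have "fst \<circ> f = Tm n" by (auto simp: f_def)
    finally show ?thesis using approx_eq[OF n] by simp
  qed
  have c2: "distr \<pi> borel snd = G"
  proof -
    have "distr \<pi> borel snd = distr G borel (snd \<circ> f)" unfolding \<pi>_def by (rule distr_distr[OF sndm fm])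
    also have "snd \<circ> f = (\<lambda>x. x)" by (auto simp: f_def)
    finally show ?thesis using distr_id2[of borel G] sG by simp
  qed
  have cp: "\<pi> \<in> couplings (approx_meas G lo hi n) G"
    unfolding couplings_def using c1 c2 by (simp add: \<pi>_def)
  have "(\<integral>\<^sup>+ z. ennreal (\<bar>fst z - snd z\<bar> powr p) \<partial>\<pi>) = (\<integral>\<^sup>+ x. ennreal (\<bar>Tm n x - x\<bar> powr p) \<partial>G)"
  proof -
    have mz: "(\<lambda>z. \<bar>fst z - snd z\<bar> powr p) \<in> borel_measurable (borel :: (real \<times> real) measure)"
      by (subst borel_prod[symmetric]) measurable
    show ?thesis unfolding \<pi>_def by (subst nn_integral_distr[OF fm]) (simp_all add: f_def mz)
  qed
  also have "\<dots> \<le> (\<integral>\<^sup>+ x. ennreal (\<eta> powr p) \<partial>G)"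
  proof (rule nn_integral_mono_AE)
    show "AE x in G. ennreal (\<bar>Tm n x - x\<bar> powr p) \<le> ennreal (\<eta> powr p)"
      using close proof eventually_elim
      case (elim x) then show ?case using p by (intro ennreal_leI powr_mono2) auto
    qed
  qed
  also have "\<dots> = ennreal (\<eta> powr p)" using emeasure_space_1 by simp
  finally have cost: "(\<integral>\<^sup>+ z. ennreal (\<bar>fst z - snd z\<bar> powr p) \<partial>\<pi>) \<le> ennreal (\<eta> powr p)" .
  define c where "c = (INF \<pi>\<in>couplings (approx_meas G lo hi n) G. \<integral>\<^sup>+ z. ennreal (\<bar>fst z - snd z\<bar> powr p) \<partial>\<pi>)"
  have "c \<le> (\<integral>\<^sup>+ z. ennreal (\<bar>fst z - snd z\<bar> powr p) \<partial>\<pi>)" unfolding c_def by (rule INF_lower[OF cp])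
  then have cle: "c \<le> ennreal (\<eta> powr p)" using cost by simp
  then have cfin: "c \<noteq> \<infinity>" by (auto simp: top_unique)
  have "enn2real c \<le> \<eta> powr p" using enn2real_mono[OF cle] by simp
  then have "enn2real c powr (1/p) \<le> (\<eta> powr p) powr (1/p)" using p by (intro powr_mono2) auto
  also have "(\<eta> powr p) powr (1/p) = \<eta>" using p eta by (simp add: powr_powr)
  finally have "enn2real c powr (1/p) \<le> \<eta>" .
  then have "ennreal (enn2real c powr (1/p)) \<le> ennreal \<eta>" by (rule ennreal_leI)
  then show ?thesis unfolding wasserstein_def Let_def c_def[symmetric] using cfin by simp
qed

lemma main:
  assumes p: "1 \<le> p" and eps: "0 < \<epsilon>"
  shows "\<exists>n\<ge>1. wasserstein p (approx_meas G lo hi n) G < ennreal \<epsilon>"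
proof -
  have e2: "0 < \<epsilon>/2" using eps by simp
  obtain n where n: "1 \<le> n" and W: "\<forall>l\<in>{1..2^n}. cl (sba G lo hi n l) - cl (sba G lo hi n (l - 1)) \<le> \<epsilon>/2"
    using widths_small[OF e2] by blast
  have "AE x in G. \<bar>Tm n x - x\<bar> \<le> \<epsilon>/2" by (rule Tm_close[OF n]) (use W in blast)
  then have "wasserstein p (approx_meas G lo hi n) G \<le> ennreal (\<epsilon>/2)" by (rule W_bound[OF n p e2])
  also have "ennreal (\<epsilon>/2) < ennreal \<epsilon>" using eps by (subst ennreal_less_iff) auto
  finally show ?thesis using n by blast
qed

end

theorem lemma7:
  fixes p :: real and lo hi :: ereal and G :: "real measure" and \<epsilon> :: real
  assumes "lo < hi"
    and "1 \<le> p"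
    and "G \<in> Pstar lo hi"
    and "\<epsilon> > 0"
  shows "\<exists>n\<ge>1. wasserstein p (approx_meas G lo hi n) G < ennreal \<epsilon>"
proof -
  from assms(3) obtain a b where G: "sets G = sets borel" "prob_space G" "emeasure G (Theta_set lo hi) = 1"
    "a < b" "msupp G = {a..b}" unfolding Pstar_def by auto
  interpret sba_ctx G lo hi a b
    by (rule sba_ctx.intro[OF G(2)], unfold_locales) (use G assms(1) in auto)
  show ?thesis by (rule main[OF assms(2) assms(4)])
qed

end
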